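(* Let $p_1\equiv p_2\equiv1\pmod4$ be primes, $d=2p_1p_2$, and let $\varepsilon_d=x+y\sqrt d$ be the fundamental unit of $\mathbb{Q}(\sqrt d)$. If $N(\varepsilon_d)=-1$, then there exist $y_1,y_2\in\mathbb{Z}[i]$ such that, for a suitable choice of sign $\pm$ (with $\mp$ the opposite sign) and of the square roots, $\sqrt{\varepsilon_d}$ equals one of (1) $\tfrac12\big[y_1(1+i)\sqrt{(1\pm i)\pi_1\pi_3}+y_2(1-i)\sqrt{(1\mp i)\pi_2\pi_4}\big]$, or (2) $\tfrac12\big[y_1(1+i)\sqrt{(1\pm i)\pi_1\pi_4}+y_2(1-i)\sqrt{(1\mp i)\pi_2\pi_3}\big]$.
   Context: $i=\sqrt{-1}$. Write $p_1=e^2+4f^2$, $p_2=g^2+4h^2$ with integers $e,f,g,h$, and set $\pi_1=e+2if$, $\pi_2=e-2if$, $\pi_3=g+2ih$, $\pi_4=g-2ih$ in $\mathbb{Z}[i]$, so that $p_1=\pi_1\pi_2$ and $p_2=\pi_3\pi_4$. $N$ denotes the norm from $\mathbb{Q}(\sqrt d)$ to $\mathbb{Q}$. *)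

theory Defs
  imports Complex_Main "HOL-Computational_Algebra.Primes"
begin

text \<open>Units of the ring of integers Z[sqrt d] of Q(sqrt d), for squarefree d = 2 mod 4,
  viewed as real numbers a + b sqrt d with a, b integers and norm a^2 - d b^2 = +-1.\<close>
definition is_unit_Zsqrt :: "int \<Rightarrow> real \<Rightarrow> bool" where
  "is_unit_Zsqrt d u \<longleftrightarrow>
     (\<exists>a b :: int. u = real_of_int a + real_of_int b * sqrt (real_of_int d) \<and>
                   (a^2 - d * b^2 = 1 \<or> a^2 - d * b^2 = -1))"

definition fundamental_unit :: "int \<Rightarrow> real \<Rightarrow> bool" where
  "fundamental_unit d \<epsilon> \<longleftrightarrow>
     is_unit_Zsqrt d \<epsilon> \<and> \<epsilon> > 1 \<and> (\<forall>u. is_unit_Zsqrt d u \<and> u > 1 \<longrightarrow> \<epsilon> \<le> u)"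

definition gauss_int :: "complex \<Rightarrow> bool" where
  "gauss_int z \<longleftrightarrow> Re z \<in> \<int> \<and> Im z \<in> \<int>"

end

theory Submission
  imports Defs
begin


definition gdvd :: "complex \<Rightarrow> complex \<Rightarrow> bool" where
  "gdvd a b \<longleftrightarrow> (\<exists>k. gauss_int k \<and> b = a * k)"

lemma gi_add[simp,intro]: "gauss_int a \<Longrightarrow> gauss_int b \<Longrightarrow> gauss_int (a + b)"
  by (auto simp: gauss_int_def)
lemma gi_diff[simp,intro]: "gauss_int a \<Longrightarrow> gauss_int b \<Longrightarrow> gauss_int (a - b)"
  by (auto simp: gauss_int_def)
lemma gi_minus[simp,intro]: "gauss_int a \<Longrightarrow> gauss_int (- a)"
  by (auto simp: gauss_int_def)
lemma gi_mult[simp,intro]: "gauss_int a \<Longrightarrow> gauss_int b \<Longrightarrow> gauss_int (a * b)"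
  by (auto simp: gauss_int_def)
lemma gi_pow[simp,intro]: "gauss_int a \<Longrightarrow> gauss_int (a ^ n)"
  by (induction n) (auto simp: gauss_int_def)
lemma gi_cnj[simp,intro]: "gauss_int a \<Longrightarrow> gauss_int (cnj a)"
  by (auto simp: gauss_int_def)
lemma gi_of_int[simp,intro]: "gauss_int (of_int a)"
  by (auto simp: gauss_int_def)
lemma gi_ii[simp,intro]: "gauss_int \<i>"
  by (auto simp: gauss_int_def)
lemma gi_0[simp,intro]: "gauss_int 0" and gi_1[simp,intro]: "gauss_int 1"
  by (auto simp: gauss_int_def)
lemma gi_numeral[simp,intro]: "gauss_int (numeral n)"
  by (auto simp: gauss_int_def)

lemma gi_cases: assumes "gauss_int z" obtains a b :: int where "z = Complex (of_int a) (of_int b)"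
  using assms unfolding gauss_int_def
  by (metis Ints_cases complex_surj)

lemma gi_norm_int: assumes "gauss_int z" shows "\<exists>n::int. (cmod z)^2 = of_int n \<and> z * cnj z = of_int n"
proof -
  obtain a b where z: "z = Complex (of_int a) (of_int b)" using gi_cases assms by blast
  show ?thesis
    by (rule exI[of _ "a^2+b^2"]) (simp add: z cmod_def complex_eq_iff power2_eq_square)
qed

lemma gdvd_refl[simp,intro]: "gdvd a a"
  unfolding gdvd_def by (rule exI[of _ 1]) auto
lemma gdvd_0[simp,intro]: "gdvd a 0"
  unfolding gdvd_def by (rule exI[of _ 0]) auto
lemma gdvd_trans: "gdvd a b \<Longrightarrow> gdvd b c \<Longrightarrow> gdvd a c"
  unfolding gdvd_def by (metis gi_mult mult.assoc)
lemma gdvd_add: "gdvd a b \<Longrightarrow> gdvd a c \<Longrightarrow> gdvd a (b + c)"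
  unfolding gdvd_def by (metis gi_add distrib_left)
lemma gdvd_diff: "gdvd a b \<Longrightarrow> gdvd a c \<Longrightarrow> gdvd a (b - c)"
  unfolding gdvd_def by (metis gi_diff right_diff_distrib)
lemma gdvd_multR: "gdvd a b \<Longrightarrow> gauss_int c \<Longrightarrow> gdvd a (b * c)"
  unfolding gdvd_def by (metis gi_mult mult.assoc)
lemma gdvd_multL: "gdvd a b \<Longrightarrow> gauss_int c \<Longrightarrow> gdvd a (c * b)"
  using gdvd_multR by (metis mult.commute)
lemma gdvd_mult_self: "gauss_int c \<Longrightarrow> gdvd a (a * c)"
  unfolding gdvd_def by auto
lemma gdvd_mult_self2: "gauss_int c \<Longrightarrow> gdvd a (c * a)"
  unfolding gdvd_def by (auto simp: mult.commute)
lemma gdvd_cnj: "gdvd a b \<Longrightarrow> gdvd (cnj a) (cnj b)"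
  unfolding gdvd_def by (metis gi_cnj complex_cnj_mult)
lemma gdvd_int: assumes "gdvd (of_int a) (of_int b)" shows "a dvd b"
proof -
  obtain k where k: "gauss_int k" "of_int b = of_int a * k" using assms gdvd_def by blast
  obtain u v where kk: "k = Complex (of_int u) (of_int v)" using gi_cases k(1) by blast
  have "of_int b = (of_int (a*u) :: real)" using k(2) by (simp add: kk complex_eq_iff)
  then show ?thesis by (metis dvd_triv_left of_int_eq_iff)
qed

lemma div_rem: assumes "gauss_int p" "gauss_int q" "q \<noteq> 0"
  shows "\<exists>k. gauss_int k \<and> (cmod (p - k*q))^2 < (cmod q)^2"
proof -
  define u where "u = p / q"
  define k where "k = Complex (of_int (round (Re u))) (of_int (round (Im u)))"
  have gk: "gauss_int k" by (simp add: k_def gauss_int_def)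
  have r1: "\<bar>Re (u - k)\<bar> \<le> 1/2" using of_int_round_abs_le[of "Re u"] by (simp add: k_def abs_minus_commute)
  have r2: "\<bar>Im (u - k)\<bar> \<le> 1/2" using of_int_round_abs_le[of "Im u"] by (simp add: k_def abs_minus_commute)
  have "(cmod (u - k))^2 = (Re (u-k))^2 + (Im (u-k))^2" by (simp add: cmod_power2)
  also have "\<dots> \<le> 1/4 + 1/4"
  proof (rule add_mono)
    show "(Re (u-k))^2 \<le> 1/4" proof -
      have "(Re (u-k))^2 = \<bar>Re (u-k)\<bar>^2" by simp
      also have "\<dots> \<le> (1/2)^2" using r1 by (intro power_mono) auto
      finally show ?thesis by (simp add: power_divide)
    qed
  next
    show "(Im (u-k))^2 \<le> 1/4" proof -
      have "(Im (u-k))^2 = \<bar>Im (u-k)\<bar>^2" by simp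
      also have "\<dots> \<le> (1/2)^2" using r2 by (intro power_mono) auto
      finally show ?thesis by (simp add: power_divide)
    qed
  qed
  finally have le: "(cmod (u - k))^2 \<le> 1/2" by simp
  have "p - k*q = q * (u - k)" using assms(3) by (simp add: u_def field_simps)
  hence "(cmod (p - k*q))^2 = (cmod q)^2 * (cmod (u-k))^2" by (simp add: norm_mult power_mult_distrib)
  also have "\<dots> \<le> (cmod q)^2 * (1/2)" using le by (intro mult_left_mono) auto
  also have "\<dots> < (cmod q)^2" using assms(3) by simp
  finally show ?thesis using gk by blast
qed

lemma gbezout: "gauss_int p \<Longrightarrow> gauss_int q \<Longrightarrow>
  \<exists>g s t. gauss_int g \<and> gauss_int s \<and> gauss_int t \<and> gdvd g p \<and> gdvd g q \<and> g = s*p + t*q"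
proof (induction "nat \<lfloor>(cmod q)^2\<rfloor>" arbitrary: p q rule: less_induct)
  case less
  show ?case
  proof (cases "q = 0")
    case True
    then show ?thesis using less.prems by (intro exI[of _ p] exI[of _ 1] exI[of _ 0]) auto
  next
    case False
    obtain k where k: "gauss_int k" "(cmod (p - k*q))^2 < (cmod q)^2"
      using div_rem[OF less.prems False] by blast
    define r where "r = p - k*q"
    have gr: "gauss_int r" using k less.prems by (simp add: r_def)
    obtain nr where nr: "(cmod r)^2 = of_int nr" using gi_norm_int[OF gr] by blast
    obtain nq where nq: "(cmod q)^2 = of_int nq" using gi_norm_int[OF less.prems(2)] by blast
    have "nr < nq" using k(2) nr nq r_def by simp
    moreover have "0 \<le> nr" using nr by (metis of_int_0_le_iff zero_le_power2 norm_ge_zero)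
    ultimately have "nat \<lfloor>(cmod r)^2\<rfloor> < nat \<lfloor>(cmod q)^2\<rfloor>" using nr nq by simp
    from less.hyps[OF this less.prems(2) gr] obtain g s t where
      g: "gauss_int g" "gauss_int s" "gauss_int t" "gdvd g q" "gdvd g r" "g = s*q + t*r" by blast
    have "p = r + k * q" by (simp add: r_def)
    hence "gdvd g p" using g k by (metis gdvd_add gdvd_multL)
    moreover have "g = t * p + (s - t*k) * q" using g(6) by (simp add: r_def algebra_simps)
    ultimately show ?thesis using g k by (intro exI[of _ g] exI[of _ t] exI[of _ "s - t*k"]) auto
  qed
qed

lemma geuclid: assumes "gauss_int g" "gauss_int p" "gauss_int r" "gdvd g (p*r)"
  "\<And>\<delta>. gauss_int \<delta> \<Longrightarrow> gdvd \<delta> g \<Longrightarrow> gdvd \<delta> p \<Longrightarrow> gdvd \<delta> 1"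
  shows "gdvd g r"
proof -
  obtain h s t where h: "gauss_int h" "gauss_int s" "gauss_int t" "gdvd h g" "gdvd h p" "h = s*g + t*p"
    using gbezout[OF assms(1,2)] by blast
  obtain k where k: "gauss_int k" "1 = h * k" using assms(5)[OF h(1,4,5)] gdvd_def by blast
  have "r = r * (h*k)" using k by simp
  also have "\<dots> = (s*k*r) * g + (t*k) * (p*r)" by (simp add: h(6) algebra_simps)
  finally have r: "r = (s*k*r) * g + (t*k) * (p*r)" .
  have "gdvd g ((s*k*r) * g)" using h(2) k(1) assms(3) by (simp add: gdvd_mult_self2)
  moreover have "gdvd g ((t*k) * (p*r))" using h(3) k(1) assms(4) by (simp add: gdvd_multL)
  ultimately have "gdvd g ((s*k*r) * g + (t*k) * (p*r))" by (rule gdvd_add)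
  then show ?thesis using r by metis
qed

lemma split_int:
  fixes p a b c d :: int
  assumes "prime p" "p = a^2 + b^2" "p dvd c^2 + d^2"
  shows "(p dvd c*a + d*b \<and> p dvd d*a - c*b) \<or> (p dvd c*a - d*b \<and> p dvd c*b + d*a)"
proof -
  have "(c*a + d*b) * (c*a - d*b) = a^2 * (c^2+d^2) - d^2 * (a^2+b^2)" by (simp add: algebra_simps power2_eq_square)
  hence "p dvd (c*a + d*b) * (c*a - d*b)" using assms(2,3) by simp
  hence "p dvd c*a + d*b \<or> p dvd c*a - d*b" using assms(1) prime_dvd_mult_iff by blast
  then show ?thesis
  proof
    assume h: "p dvd c*a + d*b"
    have "(d*a - c*b)^2 = (c^2+d^2)*(a^2+b^2) - (c*a + d*b)^2" by (simp add: algebra_simps power2_eq_square)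
    moreover have "p dvd (c^2+d^2)*(a^2+b^2) - (c*a + d*b)^2" using h assms(2,3) by (simp add: power2_eq_square)
    ultimately have "p dvd (d*a - c*b)^2" by simp
    hence "p dvd d*a - c*b" using assms(1) prime_dvd_power by blast
    with h show ?thesis by blast
  next
    assume h: "p dvd c*a - d*b"
    have "(c*b + d*a)^2 = (c^2+d^2)*(a^2+b^2) - (c*a - d*b)^2" by (simp add: algebra_simps power2_eq_square)
    moreover have "p dvd (c^2+d^2)*(a^2+b^2) - (c*a - d*b)^2" using h assms(2,3) by (simp add: power2_eq_square)
    ultimately have "p dvd (c*b + d*a)^2" by simp
    hence "p dvd c*b + d*a" using assms(1) prime_dvd_power by blast
    with h show ?thesis by blast
  qed
qed

lemma gprime_split:
  fixes p a b m :: int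
  assumes "prime p" "p = a^2 + b^2" "gauss_int v" "v * cnj v = of_int (p * m)"
  shows "gdvd (Complex (of_int a) (of_int b)) v \<or> gdvd (Complex (of_int a) (- of_int b)) v"
proof -
  obtain c d where v: "v = Complex (of_int c) (of_int d)" using gi_cases assms(3) by blast
  have "of_int (c^2 + d^2) = (of_int (p*m) :: complex)" using assms(4) by (simp add: v complex_eq_iff power2_eq_square)
  hence "c^2+d^2 = p*m" using of_int_eq_iff by blast
  hence pd: "p dvd c^2+d^2" by simp
  have p0: "p \<noteq> 0" using assms(1) by auto
  from split_int[OF assms(1,2) pd] show ?thesis
  proof
    assume "p dvd c*a + d*b \<and> p dvd d*a - c*b"
    then obtain X Y where X: "c*a + d*b = p*X" and Y: "d*a - c*b = p*Y" by (meson dvdE)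
    have "p * (a*X - b*Y) = p * c" using X Y assms(2) by (simp add: algebra_simps power2_eq_square) (metis (no_types) X Y add.commute distrib_left mult.assoc mult.commute)
    hence e1: "a*X - b*Y = c" using p0 by simp
    have "p * (b*X + a*Y) = p * d" using X Y assms(2) by (simp add: algebra_simps power2_eq_square) (metis (no_types) X Y add.commute distrib_left mult.assoc mult.commute)
    hence e2: "b*X + a*Y = d" using p0 by simp
    have "v = Complex (of_int a) (of_int b) * Complex (of_int X) (of_int Y)"
      by (simp add: v complex_eq_iff flip: e1 e2)
    thus ?thesis unfolding gdvd_def by (intro disjI1 exI[of _ "Complex (of_int X) (of_int Y)"]) (simp add: gauss_int_def)
  next
    assume "p dvd c*a - d*b \<and> p dvd c*b + d*a"
    then obtain X Y where X: "c*a - d*b = p*X" and Y: "c*b + d*a = p*Y" by (meson dvdE)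
    have "p * (a*X + b*Y) = p * c" using X Y assms(2) by (simp add: algebra_simps power2_eq_square) (metis (no_types) X Y add.commute distrib_left mult.assoc mult.commute)
    hence e1: "a*X + b*Y = c" using p0 by simp
    have "p * (a*Y - b*X) = p * d" using X Y assms(2) by (simp add: algebra_simps power2_eq_square) (metis (no_types) X Y add.commute distrib_left mult.assoc mult.commute)
    hence e2: "a*Y - b*X = d" using p0 by simp
    have "v = Complex (of_int a) (- of_int b) * Complex (of_int X) (of_int Y)"
      by (simp add: v complex_eq_iff flip: e1 e2)
    thus ?thesis unfolding gdvd_def by (intro disjI2 exI[of _ "Complex (of_int X) (of_int Y)"]) (simp add: gauss_int_def)
  qed
qed



lemma main_fact:
  fixes x y D :: int
  assumes eq: "x^2 + 1 = D * y^2" and oy: "odd y"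
  shows "\<exists>g c. gauss_int g \<and> gauss_int c \<and> of_int x + \<i> = g^2 * c \<and>
           g * cnj g = of_int \<bar>y\<bar> \<and> c * cnj c = of_int D"
proof -
  define z where "z = (of_int x + \<i> :: complex)"
  have gz: "gauss_int z" by (simp add: z_def)
  have zz: "cnj z * z = of_int D * (of_int y)^2"
  proof -
    have "cnj z * z = of_int (x^2 + 1)" by (simp add: z_def complex_eq_iff power2_eq_square)
    also have "\<dots> = of_int D * (of_int y)^2" by (simp only: eq) simp
    finally show ?thesis .
  qed
  have y0: "y \<noteq> 0" using oy by auto
  obtain k where yk: "y = 2*k + 1" using oy oddE by blast
  obtain g s t where g: "gauss_int g" "gauss_int s" "gauss_int t" "gdvd g z" "gdvd g (of_int y)"
      "g = s*z + t*of_int y"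
    using gbezout[OF gz gi_of_int[of y]] by metis
  have U: "gdvd \<delta> 1" if "gauss_int \<delta>" "gdvd \<delta> z" "gdvd \<delta> (cnj z)" "gdvd \<delta> (of_int y)" for \<delta>
  proof -
    have "1 = of_int y + (\<i> * of_int k) * (z - cnj z)" by (simp add: z_def yk complex_eq_iff)
    moreover have "gdvd \<delta> ((\<i> * of_int k) * (z - cnj z))" using that by (intro gdvd_multL gdvd_diff) auto
    ultimately show ?thesis using that gdvd_add by metis
  qed
  obtain y1 where y1: "gauss_int y1" "of_int y = g * y1" using g(5) unfolding gdvd_def by blast
  have g0: "g \<noteq> 0"
  proof
    assume "g = 0"
    hence "(of_int y :: complex) = 0" using y1(2) by simp
    thus False using y0 by simp
  qed
  have cg: "gdvd (cnj g) (cnj z)" "gdvd (cnj g) (of_int y)"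
    using gdvd_cnj[OF g(4)] gdvd_cnj[OF g(5)] by simp_all
  have "gdvd g (cnj z * z)"
  proof -
    have "cnj z * z = of_int D * (g * y1)^2" using zz y1(2) by simp
    also have "\<dots> = g * (of_int D * g * y1^2)" by (simp add: power2_eq_square)
    finally have "cnj z * z = g * (of_int D * g * y1^2)" .
    thus ?thesis using y1 g(1) gdvd_mult_self[of "of_int D * g * y1^2" g] by simp
  qed
  have cop1: "gdvd \<delta> 1" if "gauss_int \<delta>" "gdvd \<delta> g" "gdvd \<delta> (cnj z)" for \<delta>
    using U[OF that(1) gdvd_trans[OF that(2) g(4)] that(3) gdvd_trans[OF that(2) g(5)]] .
  have "gdvd g z" by (rule g(4))
  then obtain z1 where z1: "gauss_int z1" "z = g * z1" unfolding gdvd_def by blast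
  have "g * (cnj z * z1) = cnj z * z" using z1(2) by simp
  also have "\<dots> = of_int D * (g * y1)^2" using zz y1(2) by simp
  also have "\<dots> = g * (g * (of_int D * y1^2))" by (simp add: power2_eq_square)
  finally have "g * (cnj z * z1) = g * (g * (of_int D * y1^2))" .
  hence "cnj z * z1 = g * (of_int D * y1^2)" using g0 by simp
  hence "gdvd g (cnj z * z1)" using y1 by (simp add: gdvd_mult_self)
  hence "gdvd g z1" using geuclid[OF g(1) gi_cnj[OF gz] z1(1)] cop1 by blast
  then obtain c where c: "gauss_int c" "z1 = g * c" unfolding gdvd_def by blast
  have zgc: "z = g^2 * c" using z1 c by (simp add: power2_eq_square)
  obtain n where n: "(cmod g)^2 = of_int n" "g * cnj g = of_int n" using gi_norm_int[OF g(1)] by blast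
  have n0: "0 \<le> n" using n(1) by (metis of_int_0_le_iff zero_le_power2)
  have "g * cnj g = of_int y * (s * cnj s * of_int D * of_int y + s * z * cnj t + t * cnj s * cnj z + t * cnj t * of_int y)"
  proof -
    have "g * cnj g = (s*z + t*of_int y) * (cnj s * cnj z + cnj t * of_int y)" using g(6) by simp
    also have "\<dots> = s * cnj s * (cnj z * z) + of_int y * (s * z * cnj t + t * cnj s * cnj z + t * cnj t * of_int y)"
      by (simp add: algebra_simps)
    also have "\<dots> = s * cnj s * (of_int D * (of_int y)^2) + of_int y * (s * z * cnj t + t * cnj s * cnj z + t * cnj t * of_int y)"
      by (simp only: zz)
    also have "\<dots> = of_int y * (s * cnj s * of_int D * of_int y + s * z * cnj t + t * cnj s * cnj z + t * cnj t * of_int y)"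
      by (simp add: power2_eq_square algebra_simps)
    finally show ?thesis .
  qed
  moreover have "gauss_int (s * cnj s * of_int D * of_int y + s * z * cnj t + t * cnj s * cnj z + t * cnj t * of_int y)"
    using g gz by simp
  ultimately have "gdvd (of_int y) (of_int n)" using n(2) unfolding gdvd_def by metis
  hence d1: "y dvd n" by (rule gdvd_int)
  have cop2: "gdvd \<delta> 1" if "gauss_int \<delta>" "gdvd \<delta> (cnj g)" "gdvd \<delta> g" for \<delta>
    using U[OF that(1) gdvd_trans[OF that(3) g(4)] gdvd_trans[OF that(2) cg(1)] gdvd_trans[OF that(3) g(5)]] .
  have "gdvd (cnj g) (g * y1)" using cg(2) y1 by simp
  hence "gdvd (cnj g) y1" using geuclid[OF gi_cnj[OF g(1)] g(1) y1(1)] cop2 by blast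
  then obtain y2 where y2: "gauss_int y2" "y1 = cnj g * y2" unfolding gdvd_def by blast
  have "of_int y = of_int n * y2" using y1(2) y2(2) n(2) by (simp add: mult.assoc)
  hence "gdvd (of_int n) (of_int y)" using y2 unfolding gdvd_def by blast
  hence d2: "n dvd y" by (rule gdvd_int)
  have ny: "n = \<bar>y\<bar>" using zdvd_antisym_abs[OF d1 d2] n0 by simp
  have "of_int D * (of_int y)^2 = cnj z * z" using zz by simp
  also have "\<dots> = (g * cnj g)^2 * (c * cnj c)" using zgc by (simp add: power2_eq_square mult.commute mult.left_commute)
  also have "\<dots> = (of_int y)^2 * (c * cnj c)" using n(2) ny by (simp add: power2_eq_square flip: of_int_mult)
  finally have "c * cnj c = of_int D" using y0 by simp
  moreover have "g * cnj g = of_int \<bar>y\<bar>" using n(2) ny by simp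
  ultimately show ?thesis using g(1) c(1) zgc unfolding z_def by (intro exI[of _ g] exI[of _ c]) simp
qed




lemma int_sq1: fixes a b :: int assumes "a^2 + b^2 = 1"
  shows "(a = 1 \<or> a = -1) \<and> b = 0 \<or> a = 0 \<and> (b = 1 \<or> b = -1)"
proof (cases "a = 0")
  case True
  then have "b^2 = 1" using assms by simp
  then show ?thesis using True by (simp add: power2_eq_1_iff)
next
  case False
  then have "a^2 \<ge> 1" by (metis abs_ge_zero abs_le_square_iff abs_of_nonneg dual_order.trans linorder_not_le one_le_power zero_less_abs_iff int_one_le_iff_zero_less power2_abs)
  then have "b^2 \<le> 0" using assms by linarith
  then have "b = 0" by simp
  then show ?thesis using assms by (simp add: power2_eq_1_iff)
qed

lemma gunit: assumes "gauss_int u" "u * cnj u = 1"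
  shows "u = 1 \<or> u = -1 \<or> u = \<i> \<or> u = -\<i>"
proof -
  obtain a b where u: "u = Complex (of_int a) (of_int b)" using gi_cases assms(1) by blast
  have "(of_int (a^2+b^2) :: complex) = of_int 1" using assms(2) by (simp add: u complex_eq_iff power2_eq_square)
  hence "a^2 + b^2 = 1" using of_int_eq_iff by blast
  from int_sq1[OF this] show ?thesis by (auto simp: u complex_eq_iff)
qed

lemma div_1pi: assumes "gauss_int c" "c * cnj c = of_int (2 * m)"
  shows "\<exists>c1. gauss_int c1 \<and> c = (1 + \<i>) * c1 \<and> c1 * cnj c1 = of_int m"
proof -
  obtain a b where c: "c = Complex (of_int a) (of_int b)" using gi_cases assms(1) by blast
  have "(of_int (a^2+b^2) :: complex) = of_int (2*m)" using assms(2) by (simp add: c complex_eq_iff power2_eq_square)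
  hence ab: "a^2 + b^2 = 2*m" using of_int_eq_iff by blast
  hence "even (a^2 + b^2)" by simp
  hence "even (a + b)" by (simp add: power2_eq_square)
  then obtain X where X: "a + b = 2 * X" by (elim evenE)
  define Y where "Y = X - a"
  have Yb: "b - a = 2 * Y" using X by (simp add: Y_def)
  define c1 where "c1 = Complex (of_int X) (of_int Y)"
  have e: "c = (1 + \<i>) * c1" using X Yb by (simp add: c c1_def complex_eq_iff Y_def)
  have "of_int (2*m) = (1 + \<i>) * cnj (1 + \<i>) * (c1 * cnj c1)" using assms(2) e by (simp add: mult_ac)
  also have "(1 + \<i>) * cnj (1 + \<i>) = 2" by (simp add: complex_eq_iff)
  finally have "c1 * cnj c1 = of_int m" by simp
  thus ?thesis using e by (intro exI[of _ c1]) (simp add: c1_def gauss_int_def)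
qed

lemma div_pi:
  fixes p a b m :: int
  assumes "prime p" "p = a^2 + b^2" "gauss_int v" "v * cnj v = of_int (p * m)"
  shows "\<exists>\<pi> w. (\<pi> = of_int a + \<i> * of_int b \<or> \<pi> = of_int a - \<i> * of_int b) \<and> gauss_int w \<and> v = \<pi> * w \<and> w * cnj w = of_int m"
proof -
  from gprime_split[OF assms] obtain \<pi> where pi: "\<pi> = of_int a + \<i> * of_int b \<or> \<pi> = of_int a - \<i> * of_int b" "gdvd \<pi> v"
    by (metis (no_types, lifting) Complex_eq mult.commute of_real_of_int_eq of_int_minus mult_minus_right minus_mult_right diff_conv_add_uminus mult.left_commute)
  obtain w where w: "gauss_int w" "v = \<pi> * w" using pi(2) unfolding gdvd_def by blast
  have pn: "\<pi> * cnj \<pi> = of_int p" using pi(1) assms(2) by (auto simp: complex_eq_iff power2_eq_square)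
  have "of_int p * of_int m = \<pi> * cnj \<pi> * (w * cnj w)" using assms(4) w(2) by (simp add: mult_ac)
  hence "of_int p * of_int m = of_int p * (w * cnj w)" using pn by simp
  moreover have "p \<noteq> 0" using assms(1) by auto
  ultimately have "w * cnj w = of_int m" by simp
  thus ?thesis using pi(1) w by blast
qed




lemma decomp:
  fixes p1 p2 e f g h :: int
  assumes "prime p1" "p1 = e^2 + 4*f^2" "prime p2" "p2 = g^2 + 4*h^2"
    "gauss_int c" "c * cnj c = of_int (2*p1*p2)"
  shows "\<exists>\<pi> \<pi>' u. (\<pi> = of_int e + 2*\<i>*of_int f \<or> \<pi> = cnj (of_int e + 2*\<i>*of_int f)) \<and>
     (\<pi>' = of_int g + 2*\<i>*of_int h \<or> \<pi>' = cnj (of_int g + 2*\<i>*of_int h)) \<and>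
     (u = 1 \<or> u = -1 \<or> u = \<i> \<or> u = -\<i>) \<and> c = (1+\<i>)*\<pi>*\<pi>'*u"
proof -
  obtain c1 where c1: "gauss_int c1" "c = (1+\<i>)*c1" "c1 * cnj c1 = of_int (p1*p2)"
    using div_1pi[OF assms(5), of "p1*p2"] assms(6) by (auto simp: mult.assoc)
  have p1: "p1 = e^2 + (2*f)^2" using assms(2) by (simp add: power_mult_distrib)
  have p2: "p2 = g^2 + (2*h)^2" using assms(4) by (simp add: power_mult_distrib)
  obtain \<pi> c2 where c2: "\<pi> = of_int e + \<i> * of_int (2*f) \<or> \<pi> = of_int e - \<i> * of_int (2*f)"
     "gauss_int c2" "c1 = \<pi> * c2" "c2 * cnj c2 = of_int p2"
    using div_pi[OF assms(1) p1 c1(1,3)] by blast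
  obtain \<pi>' u where c3: "\<pi>' = of_int g + \<i> * of_int (2*h) \<or> \<pi>' = of_int g - \<i> * of_int (2*h)"
     "gauss_int u" "c2 = \<pi>' * u" "u * cnj u = of_int 1"
    using div_pi[OF assms(3) p2 c2(2), of 1] c2(4) by auto
  have u: "u = 1 \<or> u = -1 \<or> u = \<i> \<or> u = -\<i>" using gunit c3 by simp
  have "\<pi> = of_int e + 2*\<i>*of_int f \<or> \<pi> = cnj (of_int e + 2*\<i>*of_int f)"
    using c2(1) by (auto simp: complex_eq_iff)
  moreover have "\<pi>' = of_int g + 2*\<i>*of_int h \<or> \<pi>' = cnj (of_int g + 2*\<i>*of_int h)"
    using c3(1) by (auto simp: complex_eq_iff)
  moreover have "c = (1+\<i>)*\<pi>*\<pi>'*u" using c1(2) c2(3) c3(3) by (simp add: mult.assoc)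
  ultimately show ?thesis using u by blast
qed

lemma unit_choice: assumes "u = 1 \<or> u = -1 \<or> u = \<i> \<or> u = -\<i>"
  shows "\<exists>\<sigma> w. (\<sigma> = 1 \<or> \<sigma> = -1) \<and> (w = H \<or> w = \<i> * H) \<and>
     w^2*(1+\<sigma>*\<i>) = -\<i>*u*(1+\<i>)*H^2"
  using assms
proof (elim disjE)
  assume "u = 1" thus ?thesis by (intro exI[of _ "-1"] exI[of _ H]) (simp add: algebra_simps)
next
  assume "u = -1" thus ?thesis by (intro exI[of _ "-1"] exI[of _ "\<i>*H"]) (simp add: algebra_simps power_mult_distrib)
next
  assume "u = \<i>" thus ?thesis by (intro exI[of _ "1"] exI[of _ H]) (simp add: algebra_simps)
next
  assume "u = -\<i>" thus ?thesis by (intro exI[of _ "1"] exI[of _ "\<i>*H"]) (simp add: algebra_simps power_mult_distrib)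
qed

lemma alpha_sq0: fixes a b :: complex
  shows "(a*(1+\<i>) + b*(1-\<i>))^2 = 2*\<i>*a^2 - 2*\<i>*b^2 + 4*(a*b)"
proof -
  have "(a*(1+\<i>) + b*(1-\<i>))^2 = a^2*(1+\<i>)^2 + b^2*(1-\<i>)^2 + 2*(a*b)*((1+\<i>)*(1-\<i>))"
    by (simp add: power2_eq_square algebra_simps)
  also have "(1+\<i>)^2 = 2*\<i>" by (simp add: power2_eq_square algebra_simps)
  also have "(1-\<i>)^2 = -2*\<i>" by (simp add: power2_eq_square algebra_simps)
  also have "(1+\<i>)*(1-\<i>) = 2" by (simp add: algebra_simps)
  finally show ?thesis by (simp add: algebra_simps)
qed

lemma quarter: "(2*\<i>*A - 2*\<i>*B + 4*C)/4 = (\<i>/2)*(A - B) + (C::complex)"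
  by (simp add: field_simps)

lemma alpha_sq: fixes w r1 r2 :: complex
  shows "((w*(1+\<i>)*r1 + cnj w*(1-\<i>)*r2)/2)^2 = (\<i>/2)*((w^2*r1^2) - (cnj w)^2*r2^2) + (w*cnj w)*(r1*r2)"
proof -
  have "((w*(1+\<i>)*r1 + cnj w*(1-\<i>)*r2)/2)^2 = ((w*r1)*(1+\<i>) + (cnj w*r2)*(1-\<i>))^2 / 4"
    by (simp add: power_divide mult_ac)
  also have "\<dots> = (2*\<i>*(w*r1)^2 - 2*\<i>*(cnj w*r2)^2 + 4*((w*r1)*(cnj w*r2))) / 4"
    by (simp only: alpha_sq0)
  also have "\<dots> = (\<i>/2)*((w*r1)^2 - (cnj w*r2)^2) + ((w*r1)*(cnj w*r2))"
    by (rule quarter)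
  also have "\<dots> = (\<i>/2)*((w^2*r1^2) - (cnj w)^2*r2^2) + (w*cnj w)*(r1*r2)"
    by (simp add: power_mult_distrib mult_ac)
  finally show ?thesis .
qed

lemma mod4: fixes x :: int shows "(x^2 + 1) mod 4 \<noteq> 0"
proof -
  have "x^2 mod 4 = ((x mod 4)^2) mod 4" by (simp add: power_mod)
  moreover have "x mod 4 \<in> {0,1,2,3}" by auto
  ultimately have "x^2 mod 4 \<in> {0,1}" by (auto simp: power2_eq_square)
  moreover have "(x^2+1) mod 4 = (x^2 mod 4 + 1) mod 4" by (simp add: mod_add_left_eq)
  ultimately show ?thesis by auto
qed




lemma final_step:
  fixes A w r1 r2 s :: complex and X Y D :: int
  assumes wA: "w^2 * A = -\<i>*(of_int X + s*\<i>)" and s: "s = 1 \<or> s = -1"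
    and AA: "A * cnj A = of_int D" and D: "D > 0" and ww: "w * cnj w = of_int \<bar>Y\<bar>"
    and r1: "r1 = csqrt A" and r2: "r2 = of_real (of_int (sgn Y) * sqrt (of_int D)) / r1"
  shows "r2^2 = cnj A \<and> ((w*(1+\<i>)*r1 + cnj w*(1-\<i>)*r2)/2)^2 = of_real (of_int X + of_int Y * sqrt (of_int D))"
proof
  have A0: "A \<noteq> 0" using AA D by auto
  have r10: "r1 \<noteq> 0" using A0 r1 by simp
  have sq: "(of_real (sqrt (of_int D)) :: complex)^2 = of_int D"
    using D by (simp flip: of_real_power)
  have sg: "(of_int (sgn Y) :: complex)^2 = 1" if "Y \<noteq> 0" using that by (cases "Y > 0") (auto simp: sgn_if)
  show r2sq: "r2^2 = cnj A"
  proof (cases "Y = 0")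
    case True
    then have "w * cnj w = 0" using ww by simp
    hence "w = 0" by simp
    hence "-\<i>*(of_int X + s*\<i>) = 0" using wA by simp
    then show ?thesis using s by (auto simp: complex_eq_iff)
  next
    case False
    have "r2^2 = (of_int (sgn Y))^2 * (of_real (sqrt (of_int D)))^2 / r1^2"
      by (simp add: r2 power_divide power_mult_distrib)
    also have "\<dots> = of_int D / A" using sg[OF False] sq r1 by simp
    also have "\<dots> = cnj A" using AA A0 by (simp add: field_simps)
    finally show ?thesis .
  qed
  have r12: "r1 * r2 = of_real (of_int (sgn Y) * sqrt (of_int D))" using r2 r10 by simp
  have ys: "\<bar>real_of_int Y\<bar> * real_of_int (sgn Y) = real_of_int Y" by (metis abs_mult_sgn of_int_abs of_int_mult)
  have c2: "(cnj w)^2 * r2^2 = cnj (w^2 * A)" using r2sq by simp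
  have "((w*(1+\<i>)*r1 + cnj w*(1-\<i>)*r2)/2)^2 = (\<i>/2)*((w^2*r1^2) - (cnj w)^2*r2^2) + (w*cnj w)*(r1*r2)"
    by (rule alpha_sq)
  also have "\<dots> = (\<i>/2)*(w^2*A - cnj (w^2*A)) + of_int \<bar>Y\<bar> * of_real (of_int (sgn Y) * sqrt (of_int D))"
    using c2 r1 ww r12 by simp
  also have "\<dots> = of_real (of_int X + of_int Y * sqrt (of_int D))"
    using s unfolding wA by (auto simp: complex_eq_iff ys mult.assoc[symmetric])
  finally show "((w*(1+\<i>)*r1 + cnj w*(1-\<i>)*r2)/2)^2 = of_real (of_int X + of_int Y * sqrt (of_int D))" .
qed




theorem lemma41:
  fixes p1 p2 e f g h x y :: int
  assumes "prime p1" and "prime p2" and "p1 \<noteq> p2"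
    and "p1 mod 4 = 1" and "p2 mod 4 = 1"
    and "p1 = e^2 + 4 * f^2" and "p2 = g^2 + 4 * h^2"
    and "fundamental_unit (2 * p1 * p2) (real_of_int x + real_of_int y * sqrt (real_of_int (2 * p1 * p2)))"
    and "x^2 - (2 * p1 * p2) * y^2 = -1"
  shows "\<exists>y1 y2 :: complex. gauss_int y1 \<and> gauss_int y2 \<and>
           (\<exists>\<sigma> :: complex. (\<sigma> = 1 \<or> \<sigma> = -1) \<and>
             (\<exists>r1 r2 :: complex.
               ((r1^2 = (1 + \<sigma> * \<i>) * (of_int e + 2 * \<i> * of_int f) * (of_int g + 2 * \<i> * of_int h) \<and>
                 r2^2 = (1 - \<sigma> * \<i>) * (of_int e - 2 * \<i> * of_int f) * (of_int g - 2 * \<i> * of_int h))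
                \<or>
                (r1^2 = (1 + \<sigma> * \<i>) * (of_int e + 2 * \<i> * of_int f) * (of_int g - 2 * \<i> * of_int h) \<and>
                 r2^2 = (1 - \<sigma> * \<i>) * (of_int e - 2 * \<i> * of_int f) * (of_int g + 2 * \<i> * of_int h)))
               \<and> complex_of_real (sqrt (real_of_int x + real_of_int y * sqrt (real_of_int (2 * p1 * p2))))
                   = (y1 * (1 + \<i>) * r1 + y2 * (1 - \<i>) * r2) / 2))"
proof -
  define d where "d = 2 * p1 * p2"
  define P1 where "P1 = (of_int e + 2 * \<i> * of_int f :: complex)"
  define P3 where "P3 = (of_int g + 2 * \<i> * of_int h :: complex)"
  have cP1: "cnj P1 = of_int e - 2 * \<i> * of_int f" by (simp add: P1_def complex_eq_iff)
  have cP3: "cnj P3 = of_int g - 2 * \<i> * of_int h" by (simp add: P3_def complex_eq_iff)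
  have nP1: "P1 * cnj P1 = of_int p1" using assms(6) by (simp add: P1_def complex_eq_iff power2_eq_square)
  have nP3: "P3 * cnj P3 = of_int p2" using assms(7) by (simp add: P3_def complex_eq_iff power2_eq_square)
  have dpos: "d > 0" using assms(1,2) prime_gt_0_int by (simp add: d_def)
  have eq: "x^2 + 1 = d * y^2" using assms(9) by (simp add: d_def)
  have oy: "odd y"
  proof
    assume "even y"
    then obtain m where "y = 2*m" by (elim evenE)
    hence "x^2 + 1 = 4 * (d * m^2)" using eq by (simp add: power_mult_distrib)
    hence "(x^2 + 1) mod 4 = 0" by simp
    thus False using mod4[of x] by simp
  qed
  obtain G c where Gc: "gauss_int G" "gauss_int c" "of_int x + \<i> = G^2 * c"
      "G * cnj G = of_int \<bar>y\<bar>" "c * cnj c = of_int d"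
    using main_fact[OF eq oy] by blast
  obtain \<pi> \<pi>' u where dc: "\<pi> = P1 \<or> \<pi> = cnj P1" "\<pi>' = P3 \<or> \<pi>' = cnj P3"
      "u = 1 \<or> u = -1 \<or> u = \<i> \<or> u = -\<i>" "c = (1+\<i>)*\<pi>*\<pi>'*u"
    using decomp[OF assms(1,6,2,7) Gc(2)] Gc(5) unfolding d_def P1_def P3_def by blast
  have "\<exists>H s \<pi>'' u'. gauss_int H \<and> H * cnj H = of_int \<bar>y\<bar> \<and> (s = 1 \<or> s = -1) \<and>
          (\<pi>'' = P3 \<or> \<pi>'' = cnj P3) \<and> (u' = 1 \<or> u' = -1 \<or> u' = \<i> \<or> u' = -\<i>) \<and>
          of_int x + s * \<i> = H^2 * (1+\<i>) * P1 * \<pi>'' * u'"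
  proof (cases "\<pi> = P1")
    case True
    show ?thesis
      by (rule exI[of _ G], rule exI[of _ 1], rule exI[of _ \<pi>'], rule exI[of _ u])
         (use Gc dc True in \<open>simp add: mult_ac\<close>)
  next
    case False
    hence pc: "\<pi> = cnj P1" using dc(1) by blast
    have "cnj (of_int x + \<i>) = cnj (G^2 * c)" using Gc(3) by simp
    hence "of_int x + (-1) * \<i> = (cnj G)^2 * (1 - \<i>) * P1 * cnj \<pi>' * cnj u"
      using dc(4) pc by (simp add: mult_ac)
    also have "(1 - \<i>) = (1 + \<i>) * (-\<i>)" by (simp add: algebra_simps)
    finally have e1: "of_int x + (-1) * \<i> = (cnj G)^2 * (1 + \<i>) * P1 * cnj \<pi>' * (-\<i> * cnj u)"
      by (simp add: mult_ac)
    have u': "-\<i> * cnj u = 1 \<or> -\<i> * cnj u = -1 \<or> -\<i> * cnj u = \<i> \<or> -\<i> * cnj u = -\<i>"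
      using dc(3) by auto
    have p'': "cnj \<pi>' = P3 \<or> cnj \<pi>' = cnj P3" using dc(2) by auto
    have "cnj G * cnj (cnj G) = of_int \<bar>y\<bar>" using Gc(4) by (simp add: mult.commute)
    moreover have "gauss_int (cnj G)" using Gc(1) by simp
    moreover have "(-1::complex) = 1 \<or> (-1::complex) = -1" by simp
    ultimately show ?thesis using e1 u' p'' by blast
  qed
  then obtain H s \<pi>'' u' where H: "gauss_int H" "H * cnj H = of_int \<bar>y\<bar>" "s = 1 \<or> s = -1"
      "\<pi>'' = P3 \<or> \<pi>'' = cnj P3" "u' = 1 \<or> u' = -1 \<or> u' = \<i> \<or> u' = -\<i>"
      "of_int x + s * \<i> = H^2 * (1+\<i>) * P1 * \<pi>'' * u'" by blast
  obtain \<sigma> w where sw: "\<sigma> = 1 \<or> \<sigma> = -1" "w = H \<or> w = \<i> * H"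
      "w^2*(1+\<sigma>*\<i>) = -\<i>*u'*(1+\<i>)*H^2"
    using unit_choice[OF H(5), of H] by blast
  define A where "A = (1 + \<sigma>*\<i>) * P1 * \<pi>''"
  have gw: "gauss_int w" using sw(2) H(1) by auto
  have iH: "\<i> * H * cnj (\<i> * H) = H * cnj H" by (simp add: complex_eq_iff)
  have ww: "w * cnj w = of_int \<bar>y\<bar>" using sw(2) H(2) iH by auto
  have wA: "w^2 * A = -\<i> * (of_int x + s * \<i>)"
  proof -
    have "w^2 * A = (w^2*(1+\<sigma>*\<i>)) * P1 * \<pi>''" by (simp add: A_def mult_ac)
    also have "\<dots> = -\<i> * (H^2 * (1+\<i>) * P1 * \<pi>'' * u')" unfolding sw(3) by (simp add: mult_ac)
    finally show ?thesis using H(6) by simp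
  qed
  have n'': "\<pi>'' * cnj \<pi>'' = of_int p2" using H(4) nP3 by (auto simp: mult.commute)
  have ns: "(1 + \<sigma>*\<i>) * cnj (1 + \<sigma>*\<i>) = 2" using sw(1) by (auto simp: complex_eq_iff)
  have AA: "A * cnj A = of_int d"
  proof -
    have "A * cnj A = ((1 + \<sigma>*\<i>) * cnj (1 + \<sigma>*\<i>)) * (P1 * cnj P1) * (\<pi>'' * cnj \<pi>'')"
      by (simp add: A_def mult_ac)
    also have "\<dots> = of_int d" using ns nP1 n'' by (simp add: d_def)
    finally show ?thesis .
  qed
  define r1 where "r1 = csqrt A"
  define r2 where "r2 = complex_of_real (of_int (sgn y) * sqrt (of_int d)) / r1"
  have fs: "r2^2 = cnj A \<and> ((w*(1+\<i>)*r1 + cnj w*(1-\<i>)*r2)/2)^2 = of_real (of_int x + of_int y * sqrt (of_int d))"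
    by (rule final_step[OF wA H(3) AA dpos ww r1_def r2_def])
  have r1sq: "r1^2 = A" by (simp add: r1_def)
  have disj: "(r1^2 = (1 + \<sigma> * \<i>) * (of_int e + 2 * \<i> * of_int f) * (of_int g + 2 * \<i> * of_int h) \<and>
                 r2^2 = (1 - \<sigma> * \<i>) * (of_int e - 2 * \<i> * of_int f) * (of_int g - 2 * \<i> * of_int h))
                \<or>
                (r1^2 = (1 + \<sigma> * \<i>) * (of_int e + 2 * \<i> * of_int f) * (of_int g - 2 * \<i> * of_int h) \<and>
                 r2^2 = (1 - \<sigma> * \<i>) * (of_int e - 2 * \<i> * of_int f) * (of_int g + 2 * \<i> * of_int h))"
  proof -
    have cs: "cnj (1 + \<sigma>*\<i>) = 1 - \<sigma> * \<i>" using sw(1) by auto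
    have csig: "cnj \<sigma> = \<sigma>" using sw(1) by auto
    have cA: "cnj A = (1 - \<sigma> * \<i>) * cnj P1 * cnj \<pi>''" by (simp add: A_def csig)
    from H(4) show ?thesis
    proof
      assume "\<pi>'' = P3"
      then show ?thesis using fs r1sq cA cP1 cP3 unfolding A_def P1_def P3_def by simp
    next
      assume "\<pi>'' = cnj P3"
      then show ?thesis using fs r1sq cA cP1 cP3 unfolding A_def P1_def P3_def by simp
    qed
  qed
  define \<alpha> where "\<alpha> = (w*(1+\<i>)*r1 + cnj w*(1-\<i>)*r2)/2"
  define \<epsilon> where "\<epsilon> = real_of_int x + real_of_int y * sqrt (real_of_int d)"
  have epos: "\<epsilon> \<ge> 0" using assms(8) unfolding fundamental_unit_def \<epsilon>_def d_def by auto
  have "\<alpha>^2 = (complex_of_real (sqrt \<epsilon>))^2"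
    using fs epos by (simp add: \<alpha>_def \<epsilon>_def flip: of_real_power)
  hence "\<alpha> = complex_of_real (sqrt \<epsilon>) \<or> \<alpha> = - complex_of_real (sqrt \<epsilon>)" by (simp add: power2_eq_iff)
  then show ?thesis
  proof
    assume a: "\<alpha> = complex_of_real (sqrt \<epsilon>)"
    have main: "complex_of_real (sqrt (real_of_int x + real_of_int y * sqrt (real_of_int (2 * p1 * p2))))
       = (w * (1 + \<i>) * r1 + cnj w * (1 - \<i>) * r2) / 2"
      using a unfolding \<alpha>_def \<epsilon>_def d_def by simp
    show ?thesis
      apply (rule exI[of _ w], rule exI[of _ "cnj w"], intro conjI)
        apply (rule gw)
       apply (simp add: gw)
      apply (rule exI[of _ \<sigma>], intro conjI, rule sw(1))
      apply (rule exI[of _ r1], rule exI[of _ r2], intro conjI)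
       apply (rule disj)
      apply (rule main)
      done
  next
    assume a: "\<alpha> = - complex_of_real (sqrt \<epsilon>)"
    have main: "complex_of_real (sqrt (real_of_int x + real_of_int y * sqrt (real_of_int (2 * p1 * p2))))
       = ((-w) * (1 + \<i>) * r1 + (- cnj w) * (1 - \<i>) * r2) / 2"
    proof -
      have "complex_of_real (sqrt \<epsilon>) = - \<alpha>" using a by simp
      also have "\<dots> = (- (w * (1 + \<i>) * r1 + cnj w * (1 - \<i>) * r2)) / 2"
        unfolding \<alpha>_def by (simp only: minus_divide_left)
      also have "\<dots> = ((-w) * (1 + \<i>) * r1 + (- cnj w) * (1 - \<i>) * r2) / 2"
        by (simp only: minus_add_distrib mult_minus_left)
      finally show ?thesis unfolding \<epsilon>_def d_def by simp
    qed
    show ?thesis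
      apply (rule exI[of _ "-w"], rule exI[of _ "- cnj w"], intro conjI)
        apply (simp add: gw)
       apply (simp add: gw)
      apply (rule exI[of _ \<sigma>], intro conjI, rule sw(1))
      apply (rule exI[of _ r1], rule exI[of _ r2], intro conjI)
       apply (rule disj)
      apply (rule main)
      done
  qed
qed


end
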